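(* Let $\mathcal{X}\subset\mathbb{R}^n$ be a compact state space with safe set $\mathcal{S}\subset\mathcal{X}$, and suppose the following two assumptions hold. (A1) For the dynamical system $\dot{\bm{x}}(t)=f(\bm{x}(t),\bm{u}(t))$, $\bm{u}(t)\in\mathcal{U}$ compact, for any goal set $\mathcal{G}\subset\mathcal{S}$ there exists a policy $\pi:\mathcal{X}\to\mathcal{U}$ such that every closed-loop trajectory starting in $\mathcal{S}$ reaches $\mathcal{G}$ in finite time. (A2) The cost function space $\mathcal{F}_c$ of functions $c:\mathcal{X}\to\mathbb{R}$ is uniformly equicontinuous and there is $\theta>0$ with $1/\theta<\inf_{\mathcal{X}} c$ and $\sup_{\mathcal{X}}c<\theta$ for all $c\in\mathcal{F}_c$. For $c\in\mathcal{F}_c$ and points $\bm{x},\bm{y}\in\mathcal{S}$, let $V(\bm{x},\bm{y})$ denote the value (viscosity solution of $\|\nabla V\|=c$ on $\mathcal{S}\setminus\{\bm{y}\}$, $V=c$ at the goal $\bm{y}$) at $\bm{x}$ for the goal $\mathcal{G}=\{\bm{y}\}$, and let $\Psi$ be the corresponding solution operator $c\mapsto V(\cdot,\bm{g})$ for a fixed goal $\bm{g}$. Let $\hat\Psi$ be a neural operator with $\sup_{c\in\mathcal{F}_c}\|\Psi(c)-\hat\Psi(c)\|\le\epsilon_{NO}$ (uniform norm), and let $\hat V(\bm{x})=(\hat\Psi(c))(\bm{x})$. Then $\hat V$ is an $\epsilon$-consistent heuristic with $$\epsilon=\max_{\{\bm{x},\bm{y}\in\mathcal{S}\,\mid\,\bm{x}\ne\bm{y}\}}1+\frac{2\epsilon_{NO}}{V(\bm{x},\bm{y})}.$$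 Further, for a prescribed $\epsilon>1$, for $\hat V$ to satisfy $\epsilon$-consistency it suffices that the neural operator error satisfies $$\epsilon_{NO}\le\min_{\{\bm{x},\bm{y}\in\mathcal{S}\,\mid\,\bm{x}\ne\bm{y}\}}\frac{(\epsilon-1)\,V(\bm{x},\bm{y})}{2}.$$
   Context: A heuristic function $h:\mathcal{X}\to\mathbb{R}$ (for goal $\bm{g}$) is consistent if $h(\bm{x})\le V(\bm{x},\bm{y})+h(\bm{y})$ for all $\bm{x},\bm{y}$, and for $\epsilon>1$ it is $\epsilon$-consistent if $h(\bm{x})\le\epsilon V(\bm{x},\bm{y})+h(\bm{y})$ for all $\bm{x},\bm{y}$. A neural operator is a composition of a pointwise lifting neural network, layers of the form $v\mapsto\sigma(Wv(\bm{x})+b+\int K(\bm{x},\bm{y})v(\bm{y})d\bm{y})$, and a pointwise projection neural network. *)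

theory Defs
  imports "HOL-Analysis.Analysis"
begin

text \<open>The ODE is required to hold at every interior
  time except finitely many (to allow concatenation of trajectories).\<close>
definition admissible_traj ::
  "(real^'n \<Rightarrow> real^'m \<Rightarrow> real^'n) \<Rightarrow> (real^'m) set \<Rightarrow> (real^'n) set \<Rightarrow>
   real^'n \<Rightarrow> real^'n \<Rightarrow> real \<Rightarrow> (real \<Rightarrow> real^'n) \<Rightarrow> (real \<Rightarrow> real^'m) \<Rightarrow> bool" where
  "admissible_traj f U S x y T \<gamma> u \<longleftrightarrow>
     T \<ge> 0 \<and> \<gamma> 0 = x \<and> \<gamma> T = y \<and> continuous_on {0..T} \<gamma> \<and>
     (\<forall>t\<in>{0..T}. \<gamma> t \<in> S \<and> u t \<in> U) \<and>
     (\<exists>K. finite K \<and> (\<forall>t\<in>{0<..<T} - K. (\<gamma> has_vector_derivative f (\<gamma> t) (u t)) (at t)))"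

definition value_fun ::
  "(real^'n \<Rightarrow> real^'m \<Rightarrow> real^'n) \<Rightarrow> (real^'m) set \<Rightarrow> (real^'n) set \<Rightarrow>
   (real^'n \<Rightarrow> real) \<Rightarrow> real^'n \<Rightarrow> real^'n \<Rightarrow> real" where
  "value_fun f U S c x y =
     Inf {integral {0..T} (\<lambda>t. c (\<gamma> t)) | T \<gamma> u. admissible_traj f U S x y T \<gamma> u}"

definition closed_loop_traj ::
  "(real^'n \<Rightarrow> real^'m \<Rightarrow> real^'n) \<Rightarrow> (real^'n \<Rightarrow> real^'m) \<Rightarrow> real^'n \<Rightarrow> (real \<Rightarrow> real^'n) \<Rightarrow> bool" where
  "closed_loop_traj f \<pi> x0 \<gamma> \<longleftrightarrow>
     \<gamma> 0 = x0 \<and> (\<forall>t\<ge>0. (\<gamma> has_vector_derivative f (\<gamma> t) (\<pi> (\<gamma> t))) (at t within {0..}))"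

definition reachability_assumption ::
  "(real^'n \<Rightarrow> real^'m \<Rightarrow> real^'n) \<Rightarrow> (real^'m) set \<Rightarrow> (real^'n) set \<Rightarrow> (real^'n) set \<Rightarrow> bool" where
  "reachability_assumption f U X S \<longleftrightarrow>
     (\<forall>G. G \<subseteq> S \<and> G \<noteq> {} \<longrightarrow>
        (\<exists>\<pi>. (\<forall>x\<in>X. \<pi> x \<in> U) \<and>
             (\<forall>x0\<in>S. (\<exists>\<gamma>. closed_loop_traj f \<pi> x0 \<gamma>) \<and>
                (\<forall>\<gamma>. closed_loop_traj f \<pi> x0 \<gamma> \<longrightarrow>
                   (\<exists>T\<ge>0. \<gamma> T \<in> G \<and> (\<forall>t\<in>{0..T}. \<gamma> t \<in> S))))))"

definition cost_space_assumption :: "(real^'n) set \<Rightarrow> ((real^'n \<Rightarrow> real) set) \<Rightarrow> bool" where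
  "cost_space_assumption X Fc \<longleftrightarrow>
     (\<forall>e>0. \<exists>d>0. \<forall>c\<in>Fc. \<forall>x\<in>X. \<forall>y\<in>X. dist x y < d \<longrightarrow> \<bar>c x - c y\<bar> < e) \<and>
     (\<exists>\<theta>>0. \<forall>c\<in>Fc. 1 / \<theta> < Inf (c ` X) \<and> Sup (c ` X) < \<theta>)"

definition eps_consistent :: "'a set \<Rightarrow> ('a \<Rightarrow> 'a \<Rightarrow> real) \<Rightarrow> ('a \<Rightarrow> real) \<Rightarrow> real \<Rightarrow> bool" where
  "eps_consistent A V h \<epsilon> \<longleftrightarrow> (\<forall>x\<in>A. \<forall>y\<in>A. h x \<le> \<epsilon> * V x y + h y)"

text \<open>Finite-dimensional vectors are represented as \<open>nat \<Rightarrow> real\<close> with explicit dimensions.\<close>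
definition aff :: "nat \<Rightarrow> (nat \<Rightarrow> nat \<Rightarrow> real) \<Rightarrow> (nat \<Rightarrow> real) \<Rightarrow> (nat \<Rightarrow> real) \<Rightarrow> (nat \<Rightarrow> real)" where
  "aff m W b v = (\<lambda>i. (\<Sum>j<m. W i j * v j) + b i)"

fun nn_tail :: "(real \<Rightarrow> real) \<Rightarrow> nat \<Rightarrow> (nat \<times> (nat \<Rightarrow> nat \<Rightarrow> real) \<times> (nat \<Rightarrow> real)) list \<Rightarrow>
    (nat \<Rightarrow> real) \<Rightarrow> (nat \<Rightarrow> real)" where
  "nn_tail \<sigma> m [] v = v"
| "nn_tail \<sigma> m ((k, W, b) # ls) v = nn_tail \<sigma> k ls (aff m W b (\<lambda>j. \<sigma> (v j)))"

fun nn_out_dim :: "nat \<Rightarrow> (nat \<times> (nat \<Rightarrow> nat \<Rightarrow> real) \<times> (nat \<Rightarrow> real)) list \<Rightarrow> nat" where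
  "nn_out_dim m [] = m"
| "nn_out_dim m ((k, W, b) # ls) = nn_out_dim k ls"

fun no_layers :: "(real \<Rightarrow> real) \<Rightarrow> nat \<Rightarrow> (real^'n) set \<Rightarrow>
    ((nat \<Rightarrow> nat \<Rightarrow> real) \<times> (nat \<Rightarrow> real) \<times> (real^'n \<Rightarrow> real^'n \<Rightarrow> nat \<Rightarrow> nat \<Rightarrow> real)) list \<Rightarrow>
    (real^'n \<Rightarrow> nat \<Rightarrow> real) \<Rightarrow> (real^'n \<Rightarrow> nat \<Rightarrow> real)" where
  "no_layers \<sigma> d X [] v = v"
| "no_layers \<sigma> d X ((W, b, K) # ls) v =
     no_layers \<sigma> d X ls
       (\<lambda>x i. \<sigma> ((\<Sum>j<d. W i j * v x j) + b i +
                  (\<Sum>j<d. integral X (\<lambda>y. K x y i j * v y j))))"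

text \<open>A neural operator on X: pointwise lifting network (input (x, c(x)), first layer affine),
  integral kernel layers, pointwise projection network (output dimension 1).\<close>
definition neural_operator :: "(real^'n) set \<Rightarrow> ((real^'n \<Rightarrow> real) \<Rightarrow> (real^'n \<Rightarrow> real)) \<Rightarrow> bool" where
  "neural_operator X \<Psi> \<longleftrightarrow>
     (\<exists>\<sigma> d d0 (Wx :: nat \<Rightarrow> real^'n) wc b0 liftL layers projL.
        nn_out_dim d0 liftL = d \<and> nn_out_dim d projL = 1 \<and>
        (\<forall>c. \<forall>x\<in>X. \<Psi> c x =
           nn_tail \<sigma> d
             projL
             (no_layers \<sigma> d X layers
                (\<lambda>y. nn_tail \<sigma> d0 liftL (\<lambda>i. inner (Wx i) y + wc i * c y + b0 i)) x) 0))"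

end

theory Submission imports Defs begin

lemma concat_traj:
  fixes c :: "real^'n \<Rightarrow> real"
  assumes A1: "admissible_traj f U S x y T1 \<gamma>1 u1"
    and A2: "admissible_traj f U S y z T2 \<gamma>2 u2"
    and cc: "continuous_on S c"
  shows "\<exists>\<gamma> u. admissible_traj f U S x z (T1+T2) \<gamma> u \<and>
     integral {0..T1+T2} (\<lambda>t. c (\<gamma> t)) = integral {0..T1} (\<lambda>t. c (\<gamma>1 t)) + integral {0..T2} (\<lambda>t. c (\<gamma>2 t))"
proof -
  from A1 obtain K1 where T1: "T1 \<ge> 0" and g10: "\<gamma>1 0 = x" and g1T: "\<gamma>1 T1 = y"
    and c1: "continuous_on {0..T1} \<gamma>1" and in1: "\<forall>t\<in>{0..T1}. \<gamma>1 t \<in> S \<and> u1 t \<in> U"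
    and K1: "finite K1" and d1: "\<forall>t\<in>{0<..<T1} - K1. (\<gamma>1 has_vector_derivative f (\<gamma>1 t) (u1 t)) (at t)"
    unfolding admissible_traj_def by blast
  from A2 obtain K2 where T2: "T2 \<ge> 0" and g20: "\<gamma>2 0 = y" and g2T: "\<gamma>2 T2 = z"
    and c2: "continuous_on {0..T2} \<gamma>2" and in2: "\<forall>t\<in>{0..T2}. \<gamma>2 t \<in> S \<and> u2 t \<in> U"
    and K2: "finite K2" and d2: "\<forall>t\<in>{0<..<T2} - K2. (\<gamma>2 has_vector_derivative f (\<gamma>2 t) (u2 t)) (at t)"
    unfolding admissible_traj_def by blast
  define \<gamma> where "\<gamma> t = (if t \<le> T1 then \<gamma>1 t else \<gamma>2 (t - T1))" for t
  define u where "u t = (if t \<le> T1 then u1 t else u2 (t - T1))" for t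
  define K where "K = K1 \<union> {T1} \<union> (\<lambda>t. t + T1) ` K2"
  have cs: "continuous_on {T1..T1+T2} (\<lambda>t. \<gamma>2 (t - T1))"
    by (rule continuous_on_compose2[OF c2]) (auto intro!: continuous_intros)
  have cg: "continuous_on {0..T1+T2} \<gamma>"
  proof -
    have e: "{0..T1+T2} = {0..T1} \<union> {T1..T1+T2}" using T1 T2 by auto
    have "continuous_on {0..T1} \<gamma>"
      using c1 by (rule continuous_on_eq) (auto simp: \<gamma>_def)
    moreover have "continuous_on {T1..T1+T2} \<gamma>"
      using cs by (rule continuous_on_eq) (auto simp: \<gamma>_def g1T g20)
    ultimately show ?thesis unfolding e by (intro continuous_on_closed_Un) auto
  qed
  have inS: "\<forall>t\<in>{0..T1+T2}. \<gamma> t \<in> S \<and> u t \<in> U"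
    using in1 in2 by (auto simp: \<gamma>_def u_def)
  have der: "\<forall>t\<in>{0<..<T1+T2} - K. (\<gamma> has_vector_derivative f (\<gamma> t) (u t)) (at t)"
  proof
    fix t assume t: "t \<in> {0<..<T1+T2} - K"
    show "(\<gamma> has_vector_derivative f (\<gamma> t) (u t)) (at t)"
    proof (cases "t < T1")
      case True
      then have "t \<in> {0<..<T1} - K1" using t K_def by auto
      then have "(\<gamma>1 has_vector_derivative f (\<gamma> t) (u t)) (at t)"
        using d1 True by (auto simp: \<gamma>_def u_def)
      then show ?thesis
        by (rule has_vector_derivative_transform_within_open[of _ _ _ "{..<T1}"])
           (use True in \<open>auto simp: \<gamma>_def\<close>)
    next
      case False
      then have tT: "t > T1" using t K_def by auto
      have "t - T1 \<notin> K2"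
      proof
        assume "t - T1 \<in> K2"
        then have "(t - T1) + T1 \<in> K" unfolding K_def by blast
        then show False using t by simp
      qed
      then have "t - T1 \<in> {0<..<T2} - K2" using t tT by auto
      then have d: "(\<gamma>2 has_vector_derivative f (\<gamma> t) (u t)) (at (t - T1))"
        using d2 tT by (auto simp: \<gamma>_def u_def)
      have "((\<lambda>s. s - T1) has_vector_derivative 1) (at t)"
        by (auto intro!: derivative_eq_intros)
      from vector_diff_chain_at[OF this d]
      have "((\<lambda>s. \<gamma>2 (s - T1)) has_vector_derivative f (\<gamma> t) (u t)) (at t)"
        by (simp add: o_def)
      then show ?thesis
        by (rule has_vector_derivative_transform_within_open[of _ _ _ "{T1<..}"])
           (use tT in \<open>auto simp: \<gamma>_def\<close>)
    qed
  qed
  have adm: "admissible_traj f U S x z (T1+T2) \<gamma> u"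
    unfolding admissible_traj_def
  proof (intro conjI)
    show "0 \<le> T1 + T2" using T1 T2 by simp
    show "\<gamma> 0 = x" using T1 g10 by (simp add: \<gamma>_def)
    show "\<gamma> (T1 + T2) = z" using T2 g1T g20 g2T by (auto simp: \<gamma>_def)
    show "\<exists>K. finite K \<and> (\<forall>t\<in>{0<..<T1 + T2} - K. (\<gamma> has_vector_derivative f (\<gamma> t) (u t)) (at t))"
      proof (intro exI conjI) show "finite K" using K1 K2 unfolding K_def by simp qed (use der in blast)
  qed (use cg inS in auto)
  have ccg: "continuous_on {0..T1+T2} (\<lambda>t. c (\<gamma> t))"
    by (rule continuous_on_compose2[OF cc cg]) (use inS in auto)
  then have int: "(\<lambda>t. c (\<gamma> t)) integrable_on {0..T1+T2}"
    by (simp add: integrable_continuous_interval)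
  have "integral {0..T1+T2} (\<lambda>t. c (\<gamma> t)) = integral {0..T1} (\<lambda>t. c (\<gamma> t)) + integral {T1..T1+T2} (\<lambda>t. c (\<gamma> t))"
    using Henstock_Kurzweil_Integration.integral_combine[OF T1 _ int] T2 by simp
  also have "integral {0..T1} (\<lambda>t. c (\<gamma> t)) = integral {0..T1} (\<lambda>t. c (\<gamma>1 t))"
    by (rule integral_cong) (auto simp: \<gamma>_def)
  also have "integral {T1..T1+T2} (\<lambda>t. c (\<gamma> t)) = integral {T1..T1+T2} (\<lambda>t. c (\<gamma>2 (t - T1)))"
    by (rule integral_cong) (auto simp: \<gamma>_def g1T g20)
  also have "\<dots> = integral {0..T2} (\<lambda>t. c (\<gamma>2 t))"
    using integral_shift_real_ivl[where a=T1 and b="T1+T2" and c=T1 and f="\<lambda>t. c (\<gamma>2 (t - T1))"] by simp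
  finally show ?thesis using adm by blast
qed

lemma lower_traj:
  fixes c :: "real^'n \<Rightarrow> real"
  assumes A: "admissible_traj f U S x y T \<gamma> u"
    and cc: "continuous_on S c" and cm: "\<forall>z\<in>S. m \<le> c z" and m: "0 \<le> m"
    and fM: "\<forall>z\<in>S. \<forall>v\<in>U. norm (f z v) \<le> M" and M: "0 < M"
  shows "m * norm (y - x) / M \<le> integral {0..T} (\<lambda>t. c (\<gamma> t))"
proof -
  from A obtain K where T: "T \<ge> 0" and g0: "\<gamma> 0 = x" and gT: "\<gamma> T = y"
    and cg: "continuous_on {0..T} \<gamma>" and inS: "\<forall>t\<in>{0..T}. \<gamma> t \<in> S \<and> u t \<in> U"
    and K: "finite K" and d: "\<forall>t\<in>{0<..<T} - K. (\<gamma> has_vector_derivative f (\<gamma> t) (u t)) (at t)"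
    unfolding admissible_traj_def by blast
  have "((\<lambda>t. f (\<gamma> t) (u t)) has_integral (\<gamma> T - \<gamma> 0)) {0..T}"
    by (rule fundamental_theorem_of_calculus_interior_strong[OF K T _ cg]) (use d in auto)
  then have "norm (\<gamma> T - \<gamma> 0) \<le> M * T"
    using has_integral_bound[where B=M and f="\<lambda>t. f (\<gamma> t) (u t)" and a=0 and b=T] M fM inS T by auto
  then have n: "norm (y - x) \<le> M * T" using T g0 gT by simp
  have ccg: "continuous_on {0..T} (\<lambda>t. c (\<gamma> t))"
    by (rule continuous_on_compose2[OF cc cg]) (use inS in auto)
  have "integral {0..T} (\<lambda>t. m) \<le> integral {0..T} (\<lambda>t. c (\<gamma> t))"
    by (rule integral_le) (use ccg cm inS in \<open>auto simp: integrable_continuous_interval\<close>)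
  then have i: "m * T \<le> integral {0..T} (\<lambda>t. c (\<gamma> t))" using T by (simp add: mult.commute)
  have "norm (y - x) / M \<le> T" using n M by (simp add: divide_le_eq mult.commute)
  then have "m * (norm (y - x) / M) \<le> m * T" using m by (rule mult_left_mono)
  then show ?thesis using i by simp
qed

lemma nonempty_traj:
  assumes R: "reachability_assumption f U X S" and SX: "S \<subseteq> X" and x: "x \<in> S" and y: "y \<in> S"
  shows "\<exists>T \<gamma> u. admissible_traj f U S x y T \<gamma> u"
proof -
  from R y obtain \<pi> where pU: "\<forall>x\<in>X. \<pi> x \<in> U" and
    H: "\<forall>x0\<in>S. (\<exists>\<gamma>. closed_loop_traj f \<pi> x0 \<gamma>) \<and>
                (\<forall>\<gamma>. closed_loop_traj f \<pi> x0 \<gamma> \<longrightarrow>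
                   (\<exists>T\<ge>0. \<gamma> T \<in> {y} \<and> (\<forall>t\<in>{0..T}. \<gamma> t \<in> S)))"
    unfolding reachability_assumption_def by (metis empty_iff insert_subset subsetI singletonD)
  from H x obtain \<gamma> where cl: "closed_loop_traj f \<pi> x \<gamma>" by blast
  with H x obtain T where T: "T \<ge> 0" "\<gamma> T = y" "\<forall>t\<in>{0..T}. \<gamma> t \<in> S" by blast
  from cl have g0: "\<gamma> 0 = x" and dd: "\<forall>t\<ge>0. (\<gamma> has_vector_derivative f (\<gamma> t) (\<pi> (\<gamma> t))) (at t within {0..})"
    unfolding closed_loop_traj_def by auto
  have "continuous_on {0..T} \<gamma>"
  proof -
    have "\<forall>t\<in>{0..}. continuous (at t within {0..}) \<gamma>"
      using dd by (auto intro: has_vector_derivative_continuous)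
    then have "continuous_on {0..} \<gamma>" using continuous_on_eq_continuous_within by blast
    then show ?thesis by (rule continuous_on_subset) auto
  qed
  moreover have "\<forall>t\<in>{0<..<T} - {}. (\<gamma> has_vector_derivative f (\<gamma> t) (\<pi> (\<gamma> t))) (at t)"
  proof
    fix t assume t: "t \<in> {0<..<T} - {}"
    then have "t \<in> interior {0::real..}" by auto
    then have e: "at t within {0..} = at t" by (rule at_within_interior)
    have "t \<ge> 0" using t by auto
    then have "(\<gamma> has_vector_derivative f (\<gamma> t) (\<pi> (\<gamma> t))) (at t within {0..})" using dd by blast
    then show "(\<gamma> has_vector_derivative f (\<gamma> t) (\<pi> (\<gamma> t))) (at t)" unfolding e .
  qed
  ultimately have "admissible_traj f U S x y T \<gamma> (\<lambda>t. \<pi> (\<gamma> t))"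
    unfolding admissible_traj_def using T g0 pU SX by blast
  then show ?thesis by blast
qed

theorem lemma1:
  fixes X S :: "(real^'n) set"
    and U :: "(real^'m) set"
    and f :: "real^'n \<Rightarrow> real^'m \<Rightarrow> real^'n"
    and Fc :: "(real^'n \<Rightarrow> real) set"
    and \<Psi>hat :: "(real^'n \<Rightarrow> real) \<Rightarrow> (real^'n \<Rightarrow> real)"
    and c :: "real^'n \<Rightarrow> real"
    and g :: "real^'n"
    and eNO :: real
  assumes "compact X" and "S \<subseteq> X" and "compact U"
    and "continuous_on (X \<times> U) (\<lambda>(x, u). f x u)"
    and "reachability_assumption f U X S"
    and "cost_space_assumption X Fc"
    and "g \<in> S"
    and "neural_operator X \<Psi>hat"
    and "\<forall>c'\<in>Fc. \<forall>x\<in>S. \<bar>value_fun f U S c' x g - \<Psi>hat c' x\<bar> \<le> eNO"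
    and "c \<in> Fc"
  shows "(\<forall>\<epsilon>. \<epsilon> \<in> {1 + 2 * eNO / value_fun f U S c x y | x y. x \<in> S \<and> y \<in> S \<and> x \<noteq> y} \<and>
             (\<forall>z\<in>{1 + 2 * eNO / value_fun f U S c x y | x y. x \<in> S \<and> y \<in> S \<and> x \<noteq> y}. z \<le> \<epsilon>)
           \<longrightarrow> eps_consistent S (value_fun f U S c) (\<Psi>hat c) \<epsilon>)
       \<and> (\<forall>\<epsilon>>1. (\<forall>x\<in>S. \<forall>y\<in>S. x \<noteq> y \<longrightarrow> eNO \<le> (\<epsilon> - 1) * value_fun f U S c x y / 2)
           \<longrightarrow> eps_consistent S (value_fun f U S c) (\<Psi>hat c) \<epsilon>)"
proof -
  note SX = \<open>S \<subseteq> X\<close>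
  define V where "V = value_fun f U S c"
  define A where "A x y = {integral {0..T} (\<lambda>t. c (\<gamma> t)) | T \<gamma> u. admissible_traj f U S x y T \<gamma> u}" for x y
  have VA: "V x y = Inf (A x y)" for x y unfolding V_def A_def value_fun_def by simp
  from assms(6) have uc: "\<forall>e>0. \<exists>d>0. \<forall>x\<in>X. \<forall>y\<in>X. dist x y < d \<longrightarrow> \<bar>c x - c y\<bar> < e"
    and "\<exists>\<theta>>0. \<forall>c\<in>Fc. 1 / \<theta> < Inf (c ` X) \<and> Sup (c ` X) < \<theta>"
    using \<open>c \<in> Fc\<close> unfolding cost_space_assumption_def by blast+
  then obtain \<theta> where th: "\<theta> > 0" "1 / \<theta> < Inf (c ` X)" using \<open>c \<in> Fc\<close> by blast
  have ccX: "continuous_on X c"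
    unfolding continuous_on_iff
  proof (intro ballI allI impI)
    fix x e assume "x \<in> X" "(0::real) < e"
    then obtain d where "d > 0" "\<forall>x\<in>X. \<forall>y\<in>X. dist x y < d \<longrightarrow> \<bar>c x - c y\<bar> < e" using uc by blast
    then show "\<exists>d>0. \<forall>x'\<in>X. dist x' x < d \<longrightarrow> dist (c x') (c x) < e"
      using \<open>x \<in> X\<close> by (auto simp: dist_real_def)
  qed
  then have cc: "continuous_on S c" using SX continuous_on_subset by blast
  have "bdd_below (c ` X)"
    using compact_continuous_image[OF ccX \<open>compact X\<close>] by (simp add: compact_imp_bounded bounded_imp_bdd_below)
  then have cm: "\<forall>z\<in>S. 1 / \<theta> \<le> c z" using th SX by (meson cInf_lower image_eqI less_le_trans less_imp_le subsetD)
  have "compact ((\<lambda>(x, u). f x u) ` (X \<times> U))"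
    using compact_continuous_image[OF assms(4) compact_Times[OF \<open>compact X\<close> \<open>compact U\<close>]] .
  then obtain B where B: "\<forall>z\<in>(\<lambda>(x, u). f x u) ` (X \<times> U). norm z \<le> B"
    using compact_imp_bounded bounded_iff by blast
  define M where "M = \<bar>B\<bar> + 1"
  have M: "M > 0" unfolding M_def by simp
  have fM: "\<forall>z\<in>S. \<forall>v\<in>U. norm (f z v) \<le> M"
  proof (intro ballI)
    fix z v assume "z \<in> S" "v \<in> U"
    then have "norm (f z v) \<le> B" using B SX by force
    then show "norm (f z v) \<le> M" unfolding M_def by simp
  qed
  have m: "0 \<le> 1 / \<theta>" using th by simp
  have ne: "A x y \<noteq> {}" if "x \<in> S" "y \<in> S" for x y
    using nonempty_traj[OF assms(5) SX that] unfolding A_def by blast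
  have lb: "\<forall>a\<in>A x y. 1 / \<theta> * norm (y - x) / M \<le> a" if "x \<in> S" "y \<in> S" for x y
    unfolding A_def using lower_traj[OF _ cc cm m fM M] by blast
  have lbz: "\<forall>a\<in>A x y. 0 \<le> a" if "x \<in> S" "y \<in> S" for x y
  proof
    fix a assume "a \<in> A x y"
    moreover have "0 \<le> 1 / \<theta> * norm (y - x) / M" using m M by simp
    ultimately show "0 \<le> a" using lb[OF that] by fastforce
  qed
  have bdd: "bdd_below (A x y)" if "x \<in> S" "y \<in> S" for x y
    using lbz[OF that] by (auto simp: bdd_below_def)
  have Vlb: "1 / \<theta> * norm (y - x) / M \<le> V x y" if "x \<in> S" "y \<in> S" for x y
    unfolding VA using lb[OF that] ne[OF that] by (intro cInf_greatest) auto
  have V0: "0 \<le> V x y" if "x \<in> S" "y \<in> S" for x y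
    unfolding VA using lbz[OF that] ne[OF that] by (intro cInf_greatest) auto
  have Vpos: "0 < V x y" if "x \<in> S" "y \<in> S" "x \<noteq> y" for x y
  proof -
    have "0 < 1 / \<theta> * norm (y - x) / M" using th M that by simp
    then show ?thesis using Vlb[OF that(1,2)] by linarith
  qed
  have tri: "V x z \<le> V x y + V y z" if "x \<in> S" "y \<in> S" "z \<in> S" for x y z
  proof -
    have s: "a + b \<in> A x z" if "a \<in> A x y" "b \<in> A y z" for a b
    proof -
      from that obtain T1 \<gamma>1 u1 T2 \<gamma>2 u2 where
        "a = integral {0..T1} (\<lambda>t. c (\<gamma>1 t))" "admissible_traj f U S x y T1 \<gamma>1 u1"
        "b = integral {0..T2} (\<lambda>t. c (\<gamma>2 t))" "admissible_traj f U S y z T2 \<gamma>2 u2"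
        unfolding A_def by blast
      then obtain \<gamma> u where "admissible_traj f U S x z (T1 + T2) \<gamma> u"
        "integral {0..T1 + T2} (\<lambda>t. c (\<gamma> t)) = a + b"
        using concat_traj[OF _ _ cc, of f U x y T1 \<gamma>1 u1 z T2 \<gamma>2 u2] by metis
      then show ?thesis unfolding A_def by (metis (mono_tags, lifting) mem_Collect_eq)
    qed
    have "V x z - b \<le> V x y" if b: "b \<in> A y z" for b
    proof -
      have "V x z - b \<le> a" if "a \<in> A x y" for a
      proof -
        have "V x z \<le> a + b" unfolding VA
          by (rule cInf_lower[OF s[OF that b] bdd[OF \<open>x \<in> S\<close> \<open>z \<in> S\<close>]])
        then show ?thesis by simp
      qed
      then have "V x z - b \<le> Inf (A x y)" using ne[OF \<open>x \<in> S\<close> \<open>y \<in> S\<close>] by (intro cInf_greatest) auto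
      then show ?thesis unfolding VA .
    qed
    then have "\<forall>b\<in>A y z. V x z - V x y \<le> b" by force
    then have "V x z - V x y \<le> Inf (A y z)" using ne[OF \<open>y \<in> S\<close> \<open>z \<in> S\<close>] by (intro cInf_greatest) auto
    then show ?thesis unfolding VA by simp
  qed
  have err: "\<bar>V x g - \<Psi>hat c x\<bar> \<le> eNO" if "x \<in> S" for x
    using assms(9) \<open>c \<in> Fc\<close> that unfolding V_def by blast
  have eNO0: "0 \<le> eNO" using err[OF \<open>g \<in> S\<close>] by linarith
  have key: "\<Psi>hat c x \<le> V x y + \<Psi>hat c y + 2 * eNO" if "x \<in> S" "y \<in> S" for x y
    using err[OF that(1)] err[OF that(2)] tri[OF that \<open>g \<in> S\<close>] by linarith
  have diag: "eps_consistent S V (\<Psi>hat c) \<epsilon>"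
    if H: "\<forall>x\<in>S. \<forall>y\<in>S. x \<noteq> y \<longrightarrow> 2 * eNO \<le> (\<epsilon> - 1) * V x y" and e0: "0 \<le> \<epsilon>" for \<epsilon>
    unfolding eps_consistent_def
  proof (intro ballI)
    fix x y assume xy: "x \<in> S" "y \<in> S"
    show "\<Psi>hat c x \<le> \<epsilon> * V x y + \<Psi>hat c y"
    proof (cases "x = y")
      case True
      then show ?thesis using V0[OF xy] e0 by simp
    next
      case False
      then have "2 * eNO \<le> (\<epsilon> - 1) * V x y" using H xy by blast
      then show ?thesis using key[OF xy] by (simp add: algebra_simps)
    qed
  qed
  show ?thesis
    unfolding V_def[symmetric]
  proof (intro conjI allI impI)
    fix \<epsilon> assume H: "\<epsilon> \<in> {1 + 2 * eNO / V x y | x y. x \<in> S \<and> y \<in> S \<and> x \<noteq> y} \<and>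
             (\<forall>z\<in>{1 + 2 * eNO / V x y | x y. x \<in> S \<and> y \<in> S \<and> x \<noteq> y}. z \<le> \<epsilon>)"
    then obtain x0 y0 where "\<epsilon> = 1 + 2 * eNO / V x0 y0" "x0 \<in> S" "y0 \<in> S" by blast
    then have e1: "1 \<le> \<epsilon>" using V0 eNO0 by simp
    show "eps_consistent S V (\<Psi>hat c) \<epsilon>"
    proof (rule diag)
      show "0 \<le> \<epsilon>" using e1 by simp
      show "\<forall>x\<in>S. \<forall>y\<in>S. x \<noteq> y \<longrightarrow> 2 * eNO \<le> (\<epsilon> - 1) * V x y"
      proof (intro ballI impI)
        fix x y assume xy: "x \<in> S" "y \<in> S" "x \<noteq> y"
        then have "1 + 2 * eNO / V x y \<le> \<epsilon>" using H by blast
        then have "2 * eNO / V x y \<le> \<epsilon> - 1" by simp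
        then show "2 * eNO \<le> (\<epsilon> - 1) * V x y" using Vpos[OF xy] by (simp add: divide_le_eq)
      qed
    qed
  next
    fix \<epsilon> :: real assume "1 < \<epsilon>" and H: "\<forall>x\<in>S. \<forall>y\<in>S. x \<noteq> y \<longrightarrow> eNO \<le> (\<epsilon> - 1) * V x y / 2"
    show "eps_consistent S V (\<Psi>hat c) \<epsilon>"
      by (rule diag) (use H \<open>1 < \<epsilon>\<close> in \<open>auto simp: mult.commute\<close>)
  qed
qed

end
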